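(* Let $S=(G,P,\Lambda,I)$ be a completely simple semigroup whose sandwich matrix $P$ is singular (i.e. $P$ has two equal rows or two equal columns). Then $S$ is not an equational domain in the language $\mathcal{L}_S$.
   Context: Rees representation: a completely simple (c.s.) semigroup $S=(G,P,\Lambda,I)$ is given by a group $G$, index sets $\Lambda,I$ (each containing an element $1$), and a matrix $P=(p_{i\lambda})_{i\in I,\lambda\in\Lambda}$ over $G$ normalised so that $p_{1\lambda}=p_{i1}=1_G$; elements are triples $(\lambda,g,i)$ with product $(\lambda,g,i)(\mu,h,j)=(\lambda,gp_{i\mu}h,j)$ and inversion $(\lambda,g,i)^{-1}=(\lambda,p_{i\lambda}^{-1}g^{-1}p_{i\lambda}^{-1},i)$. $P$ is non-singular if it has no two equal rows and no two equal columns. The language $\mathcal{L}_S$ is $\{\cdot,{}^{-1}\}$ together with a constant for each element of $S$; terms are built from variables and constants using products and ${}^{-1}$. An equation is an equality $t(X)=s(X)$ of two terms; a system is any set of equations; its solution set in $S^n$ is the set of points satisfying all of them; a subset of $S^n$ is algebraic if it is the solution set of some system. $S$ is an equational domain (e.d.) in $\mathcal{L}_S$ if every finite union of algebraic sets (in $S^n$, any $n$) is algebraic. *)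

theory Defs
  imports "HOL-Algebra.Group"
begin

text \<open>The sandwich matrix is P :: 'i => 'l => 'g, with entry P i lambda = p_{i lambda}.\<close>

definition rees_carrier :: "('g,'b) monoid_scheme \<Rightarrow> 'l set \<Rightarrow> 'i set \<Rightarrow> ('l \<times> 'g \<times> 'i) set" where
  "rees_carrier G L I = L \<times> carrier G \<times> I"

definition rees_mult :: "('g,'b) monoid_scheme \<Rightarrow> ('i \<Rightarrow> 'l \<Rightarrow> 'g) \<Rightarrow>
    ('l \<times> 'g \<times> 'i) \<Rightarrow> ('l \<times> 'g \<times> 'i) \<Rightarrow> ('l \<times> 'g \<times> 'i)" where
  "rees_mult G P x y = (case x of (l, g, i) \<Rightarrow> case y of (m, h, j) \<Rightarrow>
      (l, g \<otimes>\<^bsub>G\<^esub> P i m \<otimes>\<^bsub>G\<^esub> h, j))"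

definition rees_inv :: "('g,'b) monoid_scheme \<Rightarrow> ('i \<Rightarrow> 'l \<Rightarrow> 'g) \<Rightarrow>
    ('l \<times> 'g \<times> 'i) \<Rightarrow> ('l \<times> 'g \<times> 'i)" where
  "rees_inv G P x = (case x of (l, g, i) \<Rightarrow>
      (l, inv\<^bsub>G\<^esub> (P i l) \<otimes>\<^bsub>G\<^esub> inv\<^bsub>G\<^esub> g \<otimes>\<^bsub>G\<^esub> inv\<^bsub>G\<^esub> (P i l), i))"

datatype 'c trm = Var nat | Cst 'c | Mul "'c trm" "'c trm" | Inv "'c trm"

fun trm_eval :: "('g,'b) monoid_scheme \<Rightarrow> ('i \<Rightarrow> 'l \<Rightarrow> 'g) \<Rightarrow>
    ('l \<times> 'g \<times> 'i) list \<Rightarrow> ('l \<times> 'g \<times> 'i) trm \<Rightarrow> ('l \<times> 'g \<times> 'i)" where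
  "trm_eval G P xs (Var k) = xs ! k"
| "trm_eval G P xs (Cst c) = c"
| "trm_eval G P xs (Mul t s) = rees_mult G P (trm_eval G P xs t) (trm_eval G P xs s)"
| "trm_eval G P xs (Inv t) = rees_inv G P (trm_eval G P xs t)"

fun wf_trm :: "'c set \<Rightarrow> nat \<Rightarrow> 'c trm \<Rightarrow> bool" where
  "wf_trm S n (Var k) = (k < n)"
| "wf_trm S n (Cst c) = (c \<in> S)"
| "wf_trm S n (Mul t s) = (wf_trm S n t \<and> wf_trm S n s)"
| "wf_trm S n (Inv t) = wf_trm S n t"

definition solution_set :: "('g,'b) monoid_scheme \<Rightarrow> ('i \<Rightarrow> 'l \<Rightarrow> 'g) \<Rightarrow> 'l set \<Rightarrow> 'i set \<Rightarrow>
    nat \<Rightarrow> (('l \<times> 'g \<times> 'i) trm \<times> ('l \<times> 'g \<times> 'i) trm) set \<Rightarrow> ('l \<times> 'g \<times> 'i) list set" where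
  "solution_set G P L I n E = {xs. length xs = n \<and> set xs \<subseteq> rees_carrier G L I \<and>
      (\<forall>(t, s) \<in> E. trm_eval G P xs t = trm_eval G P xs s)}"

definition algebraic_set :: "('g,'b) monoid_scheme \<Rightarrow> ('i \<Rightarrow> 'l \<Rightarrow> 'g) \<Rightarrow> 'l set \<Rightarrow> 'i set \<Rightarrow>
    nat \<Rightarrow> ('l \<times> 'g \<times> 'i) list set \<Rightarrow> bool" where
  "algebraic_set G P L I n A \<longleftrightarrow>
     (\<exists>E. (\<forall>(t, s) \<in> E. wf_trm (rees_carrier G L I) n t \<and> wf_trm (rees_carrier G L I) n s)
          \<and> A = solution_set G P L I n E)"

definition equational_domain :: "('g,'b) monoid_scheme \<Rightarrow> ('i \<Rightarrow> 'l \<Rightarrow> 'g) \<Rightarrow> 'l set \<Rightarrow> 'i set \<Rightarrow> bool" where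
  "equational_domain G P L I \<longleftrightarrow>
     (\<forall>n F. finite F \<and> (\<forall>A \<in> F. algebraic_set G P L I n A) \<longrightarrow> algebraic_set G P L I n (\<Union>F))"

definition rees_matrix :: "('g,'b) monoid_scheme \<Rightarrow> ('i \<Rightarrow> 'l \<Rightarrow> 'g) \<Rightarrow> 'l set \<Rightarrow> 'i set \<Rightarrow> 'l \<Rightarrow> 'i \<Rightarrow> bool" where
  "rees_matrix G P L I l1 i1 \<longleftrightarrow> l1 \<in> L \<and> i1 \<in> I \<and>
     (\<forall>i\<in>I. \<forall>l\<in>L. P i l \<in> carrier G) \<and>
     (\<forall>l\<in>L. P i1 l = \<one>\<^bsub>G\<^esub>) \<and> (\<forall>i\<in>I. P i l1 = \<one>\<^bsub>G\<^esub>)"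

definition singular_matrix :: "('i \<Rightarrow> 'l \<Rightarrow> 'g) \<Rightarrow> 'l set \<Rightarrow> 'i set \<Rightarrow> bool" where
  "singular_matrix P L I \<longleftrightarrow>
     (\<exists>i\<in>I. \<exists>j\<in>I. i \<noteq> j \<and> (\<forall>l\<in>L. P i l = P j l)) \<or>
     (\<exists>l\<in>L. \<exists>m\<in>L. l \<noteq> m \<and> (\<forall>i\<in>I. P i l = P i m))"

end

theory Submission
  imports Defs
begin

fun lm :: "'c trm \<Rightarrow> 'c trm" where
  "lm (Mul t s) = lm t" | "lm (Inv t) = lm t" | "lm t = t"

fun rmt :: "'c trm \<Rightarrow> 'c trm" where
  "rmt (Mul t s) = rmt s" | "rmt (Inv t) = rmt t" | "rmt t = t"

lemma rees_mult_simp: "rees_mult G P (a,g,i) (b,h,j) = (a, g \<otimes>\<^bsub>G\<^esub> P i b \<otimes>\<^bsub>G\<^esub> h, j)"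
  by (simp add: rees_mult_def)

lemma rees_inv_simp: "rees_inv G P (a,g,i) = (a, inv\<^bsub>G\<^esub> (P i a) \<otimes>\<^bsub>G\<^esub> inv\<^bsub>G\<^esub> g \<otimes>\<^bsub>G\<^esub> inv\<^bsub>G\<^esub> (P i a), i)"
  by (simp add: rees_inv_def)

lemma fst_mult: "fst (rees_mult G P x y) = fst x"
  by (cases x; cases y) (simp add: rees_mult_def)
lemma fst_inv: "fst (rees_inv G P x) = fst x"
  by (cases x) (simp add: rees_inv_def)
lemma thd_mult: "snd (snd (rees_mult G P x y)) = snd (snd y)"
  by (cases x; cases y) (simp add: rees_mult_def)
lemma thd_inv: "snd (snd (rees_inv G P x)) = snd (snd x)"
  by (cases x) (simp add: rees_inv_def)

lemma fst_lm: "fst (trm_eval G P xs t) = fst (trm_eval G P xs (lm t))"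
  by (induction t) (auto simp: fst_mult fst_inv)

lemma thd_rmt: "snd (snd (trm_eval G P xs t)) = snd (snd (trm_eval G P xs (rmt t)))"
  by (induction t) (auto simp: thd_mult thd_inv)

lemma lm_cases: "wf_trm S n t \<Longrightarrow> (\<exists>k<n. lm t = Var k) \<or> (\<exists>c\<in>S. lm t = Cst c)"
  by (induction t) auto

lemma rmt_cases: "wf_trm S n t \<Longrightarrow> (\<exists>k<n. rmt t = Var k) \<or> (\<exists>c\<in>S. rmt t = Cst c)"
  by (induction t) auto

lemma col_rel:
  assumes col: "\<forall>k\<in>I. P k l = P k m"
    and wf: "wf_trm (rees_carrier G L I) n t"
    and xs: "length xs = n" "set xs \<subseteq> rees_carrier G L I"
    and ys: "length ys = n" "set ys \<subseteq> rees_carrier G L I"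
    and rel: "\<forall>k<n. snd (xs!k) = snd (ys!k) \<and>
        (fst (xs!k) = fst (ys!k) \<or> (fst (xs!k) \<in> {l,m} \<and> fst (ys!k) \<in> {l,m}))"
  shows "snd (trm_eval G P xs t) = snd (trm_eval G P ys t) \<and> snd (snd (trm_eval G P xs t)) \<in> I \<and>
     (fst (trm_eval G P xs t) = fst (trm_eval G P ys t) \<or>
      (fst (trm_eval G P xs t) \<in> {l,m} \<and> fst (trm_eval G P ys t) \<in> {l,m}))"
  using wf
proof (induction t)
  case (Var k)
  then have "k < n" by simp
  then have "xs ! k \<in> rees_carrier G L I" using xs by (metis nth_mem subsetD)
  then have "snd (snd (xs!k)) \<in> I" by (auto simp: rees_carrier_def)
  then show ?case using rel[rule_format, OF \<open>k < n\<close>] by auto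
next
  case (Cst c)
  then show ?case by (auto simp: rees_carrier_def)
next
  case (Mul t s)
  obtain a g i where e1: "trm_eval G P xs t = (a,g,i)" by (metis prod_cases3)
  obtain a' g' i' where e2: "trm_eval G P ys t = (a',g',i')" by (metis prod_cases3)
  obtain b h j where e3: "trm_eval G P xs s = (b,h,j)" by (metis prod_cases3)
  obtain b' h' j' where e4: "trm_eval G P ys s = (b',h',j')" by (metis prod_cases3)
  from Mul e1 e2 e3 e4 have h1: "g = g'" "i = i'" "i \<in> I" "h = h'" "j = j'" "j \<in> I"
    "b = b' \<or> (b \<in> {l,m} \<and> b' \<in> {l,m})" "a = a' \<or> (a \<in> {l,m} \<and> a' \<in> {l,m})"
    by auto
  have "P i b = P i b'" using h1 col by auto
  then show ?case using e1 e2 e3 e4 h1 by (auto simp: rees_mult_simp)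
next
  case (Inv t)
  obtain a g i where e1: "trm_eval G P xs t = (a,g,i)" by (metis prod_cases3)
  obtain a' g' i' where e2: "trm_eval G P ys t = (a',g',i')" by (metis prod_cases3)
  from Inv e1 e2 have h1: "g = g'" "i = i'" "i \<in> I"
    "a = a' \<or> (a \<in> {l,m} \<and> a' \<in> {l,m})" by auto
  have "P i a = P i a'" using h1 col by auto
  then show ?case using e1 e2 h1 by (auto simp: rees_inv_simp)
qed

lemma row_rel:
  assumes row: "\<forall>k\<in>L. P i k = P j k"
    and wf: "wf_trm (rees_carrier G L I) n t"
    and xs: "length xs = n" "set xs \<subseteq> rees_carrier G L I"
    and ys: "length ys = n" "set ys \<subseteq> rees_carrier G L I"
    and rel: "\<forall>k<n. fst (xs!k) = fst (ys!k) \<and> fst (snd (xs!k)) = fst (snd (ys!k)) \<and>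
        (snd (snd (xs!k)) = snd (snd (ys!k)) \<or> (snd (snd (xs!k)) \<in> {i,j} \<and> snd (snd (ys!k)) \<in> {i,j}))"
  shows "fst (trm_eval G P xs t) = fst (trm_eval G P ys t) \<and> fst (trm_eval G P xs t) \<in> L \<and>
     fst (snd (trm_eval G P xs t)) = fst (snd (trm_eval G P ys t)) \<and>
     (snd (snd (trm_eval G P xs t)) = snd (snd (trm_eval G P ys t)) \<or>
      (snd (snd (trm_eval G P xs t)) \<in> {i,j} \<and> snd (snd (trm_eval G P ys t)) \<in> {i,j}))"
  using wf
proof (induction t)
  case (Var k)
  then have "k < n" by simp
  then have "xs ! k \<in> rees_carrier G L I" using xs by (metis nth_mem subsetD)
  then show ?case using rel[rule_format, OF \<open>k < n\<close>] by (auto simp: rees_carrier_def)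
next
  case (Cst c)
  then show ?case by (auto simp: rees_carrier_def)
next
  case (Mul t s)
  obtain a g k where e1: "trm_eval G P xs t = (a,g,k)" by (metis prod_cases3)
  obtain a' g' k' where e2: "trm_eval G P ys t = (a',g',k')" by (metis prod_cases3)
  obtain b h r where e3: "trm_eval G P xs s = (b,h,r)" by (metis prod_cases3)
  obtain b' h' r' where e4: "trm_eval G P ys s = (b',h',r')" by (metis prod_cases3)
  from Mul e1 e2 e3 e4 have h1: "g = g'" "a = a'" "a \<in> L" "h = h'" "b = b'" "b \<in> L"
    "k = k' \<or> (k \<in> {i,j} \<and> k' \<in> {i,j})" "r = r' \<or> (r \<in> {i,j} \<and> r' \<in> {i,j})"
    by auto
  have "P k b = P k' b" using h1 row by (metis empty_iff insert_iff)
  then show ?case using e1 e2 e3 e4 h1 by (auto simp: rees_mult_simp)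
next
  case (Inv t)
  obtain a g k where e1: "trm_eval G P xs t = (a,g,k)" by (metis prod_cases3)
  obtain a' g' k' where e2: "trm_eval G P ys t = (a',g',k')" by (metis prod_cases3)
  from Inv e1 e2 have h1: "g = g'" "a = a'" "a \<in> L"
    "k = k' \<or> (k \<in> {i,j} \<and> k' \<in> {i,j})" by auto
  have "P k a = P k' a" using h1 row by (metis empty_iff insert_iff)
  then show ?case using e1 e2 h1 by (auto simp: rees_inv_simp)
qed


lemma col_case:
  fixes G :: "('g, 'b) monoid_scheme" and P :: "'i \<Rightarrow> 'l \<Rightarrow> 'g"
  assumes grp: "group G" and rm: "rees_matrix G P L I l1 i1"
    and lm: "l \<in> L" "m \<in> L" "l \<noteq> m" and col: "\<forall>k\<in>I. P k l = P k m"
  shows "\<not> equational_domain G P L I"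
proof
  assume ed: "equational_domain G P L I"
  interpret group G by (rule grp)
  have i1: "i1 \<in> I" and P1: "\<forall>k\<in>L. P i1 k = \<one>\<^bsub>G\<^esub>" using rm by (auto simp: rees_matrix_def)
  define C where "C = rees_carrier G L I"
  define c where "c = (l, \<one>\<^bsub>G\<^esub>, i1)"
  define pt where "pt = (m, \<one>\<^bsub>G\<^esub>, i1)"
  have cC: "c \<in> C" "pt \<in> C" using lm i1 by (auto simp: C_def c_def pt_def rees_carrier_def)
  define E1 where "E1 = {(Mul (Cst c) (Var 0), Var 0 :: ('l \<times> 'g \<times> 'i) trm)}"
  define E2 where "E2 = {(Mul (Cst c) (Var 1), Var 1 :: ('l \<times> 'g \<times> 'i) trm)}"
  define A1 where "A1 = solution_set G P L I 2 E1"
  define A2 where "A2 = solution_set G P L I 2 E2"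
  have w1: "\<forall>(t, s) \<in> E1. wf_trm (rees_carrier G L I) 2 t \<and> wf_trm (rees_carrier G L I) 2 s"
    using cC by (simp add: E1_def C_def)
  have a1: "algebraic_set G P L I 2 A1" unfolding algebraic_set_def A1_def
    by (rule exI[of _ E1], rule conjI[OF w1 refl])
  have w2: "\<forall>(t, s) \<in> E2. wf_trm (rees_carrier G L I) 2 t \<and> wf_trm (rees_carrier G L I) 2 s"
    using cC by (simp add: E2_def C_def)
  have a2: "algebraic_set G P L I 2 A2" unfolding algebraic_set_def A2_def
    by (rule exI[of _ E2], rule conjI[OF w2 refl])
  have edF: "\<forall>F. finite F \<and> (\<forall>A \<in> F. algebraic_set G P L I 2 A) \<longrightarrow> algebraic_set G P L I 2 (\<Union>F)"
    using ed unfolding equational_domain_def by (rule spec)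
  have "algebraic_set G P L I 2 (\<Union>{A1, A2})"
    using edF[rule_format, of "{A1, A2}"] a1 a2 by simp
  then obtain E where E: "(\<forall>(t, s) \<in> E. wf_trm (rees_carrier G L I) 2 t \<and> wf_trm (rees_carrier G L I) 2 s)
          \<and> \<Union>{A1, A2} = solution_set G P L I 2 E"
    unfolding algebraic_set_def by blast
  have wfE: "\<forall>(t, s) \<in> E. wf_trm C 2 t \<and> wf_trm C 2 s" using E unfolding C_def by (rule conjunct1)
  have AE: "A1 \<union> A2 = solution_set G P L I 2 E" using E by simp
  define p where "p = [pt, pt]"
  define q1 where "q1 = [c, pt]"
  define q2 where "q2 = [pt, c]"
  have cm: "rees_mult G P c c = c" using P1 lm by (simp add: c_def rees_mult_simp)
  have pm: "fst (rees_mult G P c pt) \<noteq> fst pt" using lm by (simp add: c_def pt_def rees_mult_simp)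
  have q1A: "q1 \<in> A1" using cC cm by (auto simp: A1_def E1_def solution_set_def q1_def C_def)
  have q2A: "q2 \<in> A2" using cC cm by (auto simp: A2_def E2_def solution_set_def q2_def C_def)
  have pA: "p \<notin> A1 \<union> A2" using pm
    by (auto simp: A1_def E1_def A2_def E2_def solution_set_def p_def)
  have q1E: "q1 \<in> solution_set G P L I 2 E" and q2E: "q2 \<in> solution_set G P L I 2 E"
    using AE q1A q2A by auto
  have pE: "p \<in> solution_set G P L I 2 E"
    unfolding solution_set_def
  proof (intro CollectI conjI ballI)
    show "length p = 2" by (simp add: p_def)
    show "set p \<subseteq> rees_carrier G L I" using cC by (simp add: p_def C_def)
    fix e assume eE: "e \<in> E"
    obtain t s where e: "e = (t, s)" by (cases e)
    have wt: "wf_trm C 2 t" and ws: "wf_trm C 2 s" using wfE eE e by auto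
    have et1: "trm_eval G P q1 t = trm_eval G P q1 s" and et2: "trm_eval G P q2 t = trm_eval G P q2 s"
      using q1E q2E eE e unfolding solution_set_def by auto
    have rel: "\<forall>k<2. snd (p!k) = snd (q1!k) \<and>
        (fst (p!k) = fst (q1!k) \<or> (fst (p!k) \<in> {l,m} \<and> fst (q1!k) \<in> {l,m}))"
      by (auto simp: less_Suc_eq numeral_2_eq_2 p_def q1_def c_def pt_def)
    have lens: "length p = 2" "length q1 = 2" "set p \<subseteq> C" "set q1 \<subseteq> C"
      using cC by (auto simp: p_def q1_def)
    have r1: "snd (trm_eval G P p t) = snd (trm_eval G P q1 t)"
      using col_rel[OF col wt[unfolded C_def] lens(1) _ lens(2) _ rel] lens(3,4) by (auto simp: C_def)
    have r2: "snd (trm_eval G P p s) = snd (trm_eval G P q1 s)"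
      using col_rel[OF col ws[unfolded C_def] lens(1) _ lens(2) _ rel] lens(3,4) by (auto simp: C_def)
    have ft1: "fst (trm_eval G P q1 t) = fst (trm_eval G P q1 s)" "fst (trm_eval G P q2 t) = fst (trm_eval G P q2 s)"
      using et1 et2 by auto
    have key: "\<And>u. wf_trm C 2 u \<Longrightarrow> (\<forall>xs. fst (trm_eval G P xs u) = fst (xs!0)) \<or>
        (\<forall>xs. fst (trm_eval G P xs u) = fst (xs!1)) \<or> (\<exists>a. \<forall>xs. fst (trm_eval G P xs u) = a)"
    proof -
      fix u assume "wf_trm C 2 u"
      from lm_cases[OF this] show "?thesis u"
      proof
        assume "\<exists>k<2. lm u = Var k"
        then obtain k where "k < 2" "lm u = Var k" by auto
        then show ?thesis using fst_lm[of G P _ u] by (auto simp: less_Suc_eq numeral_2_eq_2)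
      next
        assume "\<exists>d\<in>C. lm u = Cst d"
        then show ?thesis using fst_lm[of G P _ u] by auto
      qed
    qed
    have "fst (trm_eval G P p t) = fst (trm_eval G P p s)"
      using key[OF wt] key[OF ws] ft1 lm(3)
      by (auto simp: p_def q1_def q2_def c_def pt_def)
    then have "trm_eval G P p t = trm_eval G P p s" using r1 r2 et1 by (simp add: prod_eq_iff)
    then show "case e of (t, s) \<Rightarrow> trm_eval G P p t = trm_eval G P p s" using e by simp
  qed
  then show False using pA AE by auto
qed

lemma row_case:
  fixes G :: "('g, 'b) monoid_scheme" and P :: "'i \<Rightarrow> 'l \<Rightarrow> 'g"
  assumes grp: "group G" and rm: "rees_matrix G P L I l1 i1"
    and lm: "l \<in> I" "m \<in> I" "l \<noteq> m" and row: "\<forall>k\<in>L. P l k = P m k"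
  shows "\<not> equational_domain G P L I"
proof
  assume ed: "equational_domain G P L I"
  interpret group G by (rule grp)
  have i1: "l1 \<in> L" and P1: "\<forall>k\<in>I. P k l1 = \<one>\<^bsub>G\<^esub>" using rm by (auto simp: rees_matrix_def)
  define C where "C = rees_carrier G L I"
  define c where "c = (l1, \<one>\<^bsub>G\<^esub>, l)"
  define pt where "pt = (l1, \<one>\<^bsub>G\<^esub>, m)"
  have cC: "c \<in> C" "pt \<in> C" using lm i1 by (auto simp: C_def c_def pt_def rees_carrier_def)
  define E1 where "E1 = {(Mul (Var 0) (Cst c), Var 0 :: ('l \<times> 'g \<times> 'i) trm)}"
  define E2 where "E2 = {(Mul (Var 1) (Cst c), Var 1 :: ('l \<times> 'g \<times> 'i) trm)}"
  define A1 where "A1 = solution_set G P L I 2 E1"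
  define A2 where "A2 = solution_set G P L I 2 E2"
  have w1: "\<forall>(t, s) \<in> E1. wf_trm (rees_carrier G L I) 2 t \<and> wf_trm (rees_carrier G L I) 2 s"
    using cC by (simp add: E1_def C_def)
  have a1: "algebraic_set G P L I 2 A1" unfolding algebraic_set_def A1_def
    by (rule exI[of _ E1], rule conjI[OF w1 refl])
  have w2: "\<forall>(t, s) \<in> E2. wf_trm (rees_carrier G L I) 2 t \<and> wf_trm (rees_carrier G L I) 2 s"
    using cC by (simp add: E2_def C_def)
  have a2: "algebraic_set G P L I 2 A2" unfolding algebraic_set_def A2_def
    by (rule exI[of _ E2], rule conjI[OF w2 refl])
  have edF: "\<forall>F. finite F \<and> (\<forall>A \<in> F. algebraic_set G P L I 2 A) \<longrightarrow> algebraic_set G P L I 2 (\<Union>F)"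
    using ed unfolding equational_domain_def by (rule spec)
  have "algebraic_set G P L I 2 (\<Union>{A1, A2})"
    using edF[rule_format, of "{A1, A2}"] a1 a2 by simp
  then obtain E where E: "(\<forall>(t, s) \<in> E. wf_trm (rees_carrier G L I) 2 t \<and> wf_trm (rees_carrier G L I) 2 s)
          \<and> \<Union>{A1, A2} = solution_set G P L I 2 E"
    unfolding algebraic_set_def by blast
  have wfE: "\<forall>(t, s) \<in> E. wf_trm C 2 t \<and> wf_trm C 2 s" using E unfolding C_def by (rule conjunct1)
  have AE: "A1 \<union> A2 = solution_set G P L I 2 E" using E by simp
  define p where "p = [pt, pt]"
  define q1 where "q1 = [c, pt]"
  define q2 where "q2 = [pt, c]"
  have cm: "rees_mult G P c c = c" using P1 lm by (simp add: c_def rees_mult_simp)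
  have pm: "snd (snd (rees_mult G P pt c)) \<noteq> snd (snd pt)" using lm by (simp add: c_def pt_def rees_mult_simp)
  have q1A: "q1 \<in> A1" using cC cm by (auto simp: A1_def E1_def solution_set_def q1_def C_def)
  have q2A: "q2 \<in> A2" using cC cm by (auto simp: A2_def E2_def solution_set_def q2_def C_def)
  have pA: "p \<notin> A1 \<union> A2" using pm
    by (auto simp: A1_def E1_def A2_def E2_def solution_set_def p_def)
  have q1E: "q1 \<in> solution_set G P L I 2 E" and q2E: "q2 \<in> solution_set G P L I 2 E"
    using AE q1A q2A by auto
  have pE: "p \<in> solution_set G P L I 2 E"
    unfolding solution_set_def
  proof (intro CollectI conjI ballI)
    show "length p = 2" by (simp add: p_def)
    show "set p \<subseteq> rees_carrier G L I" using cC by (simp add: p_def C_def)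
    fix e assume eE: "e \<in> E"
    obtain t s where e: "e = (t, s)" by (cases e)
    have wt: "wf_trm C 2 t" and ws: "wf_trm C 2 s" using wfE eE e by auto
    have et1: "trm_eval G P q1 t = trm_eval G P q1 s" and et2: "trm_eval G P q2 t = trm_eval G P q2 s"
      using q1E q2E eE e unfolding solution_set_def by auto
    have rel: "\<forall>k<2. fst (p!k) = fst (q1!k) \<and> fst (snd (p!k)) = fst (snd (q1!k)) \<and>
        (snd (snd (p!k)) = snd (snd (q1!k)) \<or> (snd (snd (p!k)) \<in> {l,m} \<and> snd (snd (q1!k)) \<in> {l,m}))"
      by (auto simp: less_Suc_eq numeral_2_eq_2 p_def q1_def c_def pt_def)
    have lens: "length p = 2" "length q1 = 2" "set p \<subseteq> C" "set q1 \<subseteq> C"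
      using cC by (auto simp: p_def q1_def)
    have r1: "fst (trm_eval G P p t) = fst (trm_eval G P q1 t) \<and> fst (snd (trm_eval G P p t)) = fst (snd (trm_eval G P q1 t))"
      using row_rel[OF row wt[unfolded C_def] lens(1) _ lens(2) _ rel] lens(3,4) by (auto simp: C_def)
    have r2: "fst (trm_eval G P p s) = fst (trm_eval G P q1 s) \<and> fst (snd (trm_eval G P p s)) = fst (snd (trm_eval G P q1 s))"
      using row_rel[OF row ws[unfolded C_def] lens(1) _ lens(2) _ rel] lens(3,4) by (auto simp: C_def)
    have ft1: "snd (snd (trm_eval G P q1 t)) = snd (snd (trm_eval G P q1 s))" "snd (snd (trm_eval G P q2 t)) = snd (snd (trm_eval G P q2 s))"
      using et1 et2 by auto
    have key: "\<And>u. wf_trm C 2 u \<Longrightarrow> (\<forall>xs. snd (snd (trm_eval G P xs u)) = snd (snd (xs!0))) \<or>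
        (\<forall>xs. snd (snd (trm_eval G P xs u)) = snd (snd (xs!1))) \<or> (\<exists>a. \<forall>xs. snd (snd (trm_eval G P xs u)) = a)"
    proof -
      fix u assume "wf_trm C 2 u"
      from rmt_cases[OF this] show "?thesis u"
      proof
        assume "\<exists>k<2. rmt u = Var k"
        then obtain k where "k < 2" "rmt u = Var k" by auto
        then show ?thesis using thd_rmt[of G P _ u] by (auto simp: less_Suc_eq numeral_2_eq_2)
      next
        assume "\<exists>d\<in>C. rmt u = Cst d"
        then show ?thesis using thd_rmt[of G P _ u] by auto
      qed
    qed
    have "snd (snd (trm_eval G P p t)) = snd (snd (trm_eval G P p s))"
      using key[OF wt] key[OF ws] ft1 lm(3)
      by (auto simp: p_def q1_def q2_def c_def pt_def)
    then have "trm_eval G P p t = trm_eval G P p s" using r1 r2 et1 by (simp add: prod_eq_iff)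
    then show "case e of (t, s) \<Rightarrow> trm_eval G P p t = trm_eval G P p s" using e by simp
  qed
  then show False using pA AE by auto
qed

theorem mainTheorem2:
  fixes G :: "('g, 'b) monoid_scheme" and P :: "'i \<Rightarrow> 'l \<Rightarrow> 'g"
    and L :: "'l set" and I :: "'i set" and l1 :: 'l and i1 :: 'i
  assumes "group G"
    and "rees_matrix G P L I l1 i1"
    and "singular_matrix P L I"
  shows "\<not> equational_domain G P L I"
  using assms(3) unfolding singular_matrix_def
proof (elim disjE bexE conjE)
  fix i j assume "i \<in> I" "j \<in> I" "i \<noteq> j" "\<forall>l\<in>L. P i l = P j l"
  then show ?thesis using row_case[OF assms(1,2)] by blast
next
  fix l m assume "l \<in> L" "m \<in> L" "l \<noteq> m" "\<forall>i\<in>I. P i l = P i m"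
  then show ?thesis using col_case[OF assms(1,2)] by blast
qed

end
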